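(* Let $q=p^k$ be an odd prime power ($p$ prime, $k\ge1$), and let $S$ be a Sylow $p$-subgroup of the symmetric group on $q$ points. Then for every element $s\in S$, there is a complete mapping $f$ of $\mathbb{F}_q$ with $\operatorname{CT}(f)=\operatorname{CT}(s)$.
   Context: A complete mapping of the field $\mathbb{F}_q$ is a permutation $f$ of $\mathbb{F}_q$ such that $x\mapsto f(x)+x$ is also a permutation of $\mathbb{F}_q$. The cycle type $\operatorname{CT}(\sigma)$ of a permutation $\sigma$ of a finite set $\Omega$ is the monomial $x_1^{k_1}\cdots x_{|\Omega|}^{k_{|\Omega|}}$, where $k_\ell$ is the number of cycles of length $\ell$ of $\sigma$. *)

theory Defs
  imports "HOL-Algebra.Sym_Groups" "HOL-Combinatorics.Orbits"
    "HOL-Computational_Algebra.Primes"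
begin

definition complete_mapping :: "('a::field \<Rightarrow> 'a) \<Rightarrow> bool" where
  "complete_mapping f \<longleftrightarrow> f permutes UNIV \<and> (\<lambda>x. f x + x) permutes UNIV"

definition cycle_type :: "('a \<Rightarrow> 'a) \<Rightarrow> 'a set \<Rightarrow> nat \<Rightarrow> nat" where
  "cycle_type \<sigma> \<Omega> l = card {orbit \<sigma> x | x. x \<in> \<Omega> \<and> card (orbit \<sigma> x) = l}"

definition sylow_subgroup :: "('g, 'b) monoid_scheme \<Rightarrow> nat \<Rightarrow> 'g set \<Rightarrow> bool" where
  "sylow_subgroup G p S \<longleftrightarrow> subgroup S G \<and> card S = p ^ multiplicity p (order G)"

end

theory Submission
  imports Defs "HOL-Number_Theory.Number_Theory" "HOL-Library.Multiset"
begin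


lemma perm_orbit_eq:
  assumes "permutation f" "y \<in> orbit f x" shows "orbit f y = orbit f x"
proof
  show "orbit f y \<subseteq> orbit f x" using assms(2) orbit_trans by fast
  have "x \<in> orbit f y"
    using orbit_swap[OF permutation_self_in_orbit[OF assms(1)] assms(2)] .
  then show "orbit f x \<subseteq> orbit f y" using orbit_trans by fast
qed

lemma orbit_conj:
  assumes g: "g permutes A" "finite A" and x: "x \<in> A"
    and eq: "\<And>x. x \<in> A \<Longrightarrow> g' (h x) = h (g x)"
  shows "orbit g' (h x) = h ` orbit g x"
proof -
  have perm: "permutation g" using g permutation_permutes by blast
  show ?thesis
    using orbit_inverse[of x g g' h] permutation_self_in_orbit[OF perm]
      permutes_orbit_subset[OF g(1) x] eq by auto
qed

lemma cycle_type_conj: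
  assumes g: "g permutes A" "finite A" and h: "bij_betw h A B"
    and eq: "\<And>x. x \<in> A \<Longrightarrow> g' (h x) = h (g x)"
  shows "cycle_type g' B l = cycle_type g A l"
proof -
  have orb: "orbit g' (h x) = h ` orbit g x" if "x \<in> A" for x
    using orbit_conj[OF g that] eq by blast
  have sub: "orbit g x \<subseteq> A" if "x\<in>A" for x using permutes_orbit_subset[OF g(1) that] .
  have inj: "inj_on h A" using h bij_betw_def by blast
  have cardeq: "card (orbit g' (h x)) = card (orbit g x)" if "x\<in>A" for x
    using orb[OF that] card_image inj_on_subset[OF inj sub[OF that]] by metis
  have B: "B = h ` A" using h by (simp add: bij_betw_def)
  have "{orbit g' y |y. y \<in> B \<and> card (orbit g' y) = l}
      = image h ` {orbit g x |x. x \<in> A \<and> card (orbit g x) = l}"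
  proof (intro Set.set_eqI iffI)
    fix U assume "U \<in> {orbit g' y |y. y \<in> B \<and> card (orbit g' y) = l}"
    then obtain x where x: "x \<in> A" "U = orbit g' (h x)" "card (orbit g' (h x)) = l" using B by auto
    have "U = h ` orbit g x" "card (orbit g x) = l" using x orb[OF x(1)] cardeq[OF x(1)] by auto
    then show "U \<in> image h ` {orbit g x |x. x \<in> A \<and> card (orbit g x) = l}"
      using x(1) by blast
  next
    fix U assume "U \<in> image h ` {orbit g x |x. x \<in> A \<and> card (orbit g x) = l}"
    then obtain x where x: "x \<in> A" "U = h ` orbit g x" "card (orbit g x) = l" by auto
    have "U = orbit g' (h x)" "h x \<in> B" "card (orbit g' (h x)) = l"
      using x orb[OF x(1)] cardeq[OF x(1)] B by auto
    then show "U \<in> {orbit g' y |y. y \<in> B \<and> card (orbit g' y) = l}" by blast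
  qed
  moreover have "inj_on (image h) {orbit g x |x. x \<in> A \<and> card (orbit g x) = l}"
    by (rule inj_on_subset[OF inj_on_image_Pow[OF inj]]) (use sub in auto)
  ultimately show ?thesis unfolding cycle_type_def by (simp add: card_image)
qed

lemma cycle_type_UN:
  assumes I: "finite I" and disj: "disjoint_family_on B I"
    and inv: "\<And>i x. i \<in> I \<Longrightarrow> x \<in> B i \<Longrightarrow> x \<in> orbit f x \<and> orbit f x \<subseteq> B i"
    and fin: "\<And>i. i \<in> I \<Longrightarrow> finite (B i)"
  shows "cycle_type f (\<Union>i\<in>I. B i) l = (\<Sum>i\<in>I. cycle_type f (B i) l)"
proof -
  let ?F = "\<lambda>i. {orbit f x |x. x \<in> B i \<and> card (orbit f x) = l}"
  have "{orbit f x |x. x \<in> (\<Union>i\<in>I. B i) \<and> card (orbit f x) = l} = (\<Union>i\<in>I. ?F i)" by blast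
  moreover have "card (\<Union>i\<in>I. ?F i) = (\<Sum>i\<in>I. card (?F i))"
  proof (rule card_UN_disjoint[OF I])
    show "\<forall>i\<in>I. finite (?F i)"
    proof
      fix i assume "i \<in> I"
      have "?F i = (\<lambda>x. orbit f x) ` {x \<in> B i. card (orbit f x) = l}" by blast
      then show "finite (?F i)" using fin[OF \<open>i\<in>I\<close>] by simp
    qed
    show "\<forall>i\<in>I. \<forall>j\<in>I. i \<noteq> j \<longrightarrow> ?F i \<inter> ?F j = {}"
    proof (intro ballI impI)
      fix i j assume ij: "i \<in> I" "j \<in> I" "i \<noteq> j"
      show "?F i \<inter> ?F j = {}"
      proof (rule ccontr)
        assume "?F i \<inter> ?F j \<noteq> {}"
        then obtain x y where xy: "x \<in> B i" "y \<in> B j" "orbit f x = orbit f y" by blast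
        then have "x \<in> B j" using inv[OF ij(1) xy(1)] inv[OF ij(2) xy(2)] by auto
        then show False using disj ij xy(1) unfolding disjoint_family_on_def by blast
      qed
    qed
  qed
  ultimately show ?thesis unfolding cycle_type_def by simp
qed

section \<open>The model (Z/p)^m as lists\<close>

definition V :: "nat \<Rightarrow> nat \<Rightarrow> nat list set" where
  "V p m = {xs. set xs \<subseteq> {..<p} \<and> length xs = m}"

definition addp :: "nat \<Rightarrow> nat list \<Rightarrow> nat list \<Rightarrow> nat list" where
  "addp p xs ys = map2 (\<lambda>a b. (a + b) mod p) xs ys"

definition cmV :: "nat \<Rightarrow> nat \<Rightarrow> (nat list \<Rightarrow> nat list) \<Rightarrow> bool" where
  "cmV p m g \<longleftrightarrow> g permutes V p m \<and> bij_betw (\<lambda>x. addp p (g x) x) (V p m) (V p m)"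

lemma finite_V: "finite (V p m)"
  unfolding V_def using finite_lists_length_eq[of "{..<p}" m] by simp

lemma card_V: "card (V p m) = p ^ m"
  unfolding V_def using card_lists_length_eq[of "{..<p}" m] by simp

lemma V_0: "V p 0 = {[]}"
  unfolding V_def by auto

lemma Cons_in_V: "(i # xs \<in> V p (Suc m)) \<longleftrightarrow> i < p \<and> xs \<in> V p m"
  unfolding V_def by auto

lemma V_Suc_cases:
  assumes "x \<in> V p (Suc m)"
  obtains i xs where "x = i # xs" "i < p" "xs \<in> V p m"
  using assms unfolding V_def by (cases x) auto

lemma V_Suc: "V p (Suc m) = (\<Union>i\<in>{..<p}. Cons i ` V p m)"
proof (intro Set.set_eqI iffI)
  fix x assume "x \<in> V p (Suc m)"
  then obtain i xs where "x = i # xs" "i < p" "xs \<in> V p m" by (rule V_Suc_cases)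
  then show "x \<in> (\<Union>i\<in>{..<p}. Cons i ` V p m)" by blast
qed (auto simp: Cons_in_V)

lemma addp_Cons [simp]: "addp p (a # xs) (b # ys) = ((a + b) mod p) # addp p xs ys"
  unfolding addp_def by simp

lemma addp_Nil [simp]: "addp p [] [] = []"
  unfolding addp_def by simp

lemma addp_in_V:
  assumes "0 < p" "xs \<in> V p m" "ys \<in> V p m" shows "addp p xs ys \<in> V p m"
  using assms unfolding V_def addp_def by (auto simp: set_zip)

lemma mod_lt2: "(n::nat) < 2 * p \<Longrightarrow> n mod p = (if n < p then n else n - p)"
  by (simp add: le_mod_geq)

lemma mod_inj_double:
  assumes "odd p" "(a::nat) < p" "b < p" "(2 * a) mod p = (2 * b) mod p" shows "a = b"
proof -
  obtain r where r: "p = 2 * r + 1" using assms(1) oddE by blast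
  have "2 * a < 2 * p" "2 * b < 2 * p" using assms by auto
  then have "(if 2 * a < p then 2 * a else 2 * a - p) = (if 2 * b < p then 2 * b else 2 * b - p)"
    using assms(4) mod_lt2 by metis
  then show ?thesis using assms(2,3) unfolding r by (cases "2 * a < 2 * r + 1"; cases "2 * b < 2 * r + 1"; simp; presburger)
qed

lemma mod_inj_double1:
  assumes "odd p" "(a::nat) < p" "b < p" "(2 * a + 1) mod p = (2 * b + 1) mod p" shows "a = b"
proof -
  obtain r where r: "p = 2 * r + 1" using assms(1) oddE by blast
  have "2 * a + 1 < 2 * p" "2 * b + 1 < 2 * p" using assms by auto
  then have e: "(if 2 * a + 1 < p then 2 * a + 1 else 2 * a + 1 - p) = (if 2 * b + 1 < p then 2 * b + 1 else 2 * b + 1 - p)"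
    using assms(4) mod_lt2 by metis
  have "a < r \<or> a \<ge> r" "b < r \<or> b \<ge> r" by auto
  then show ?thesis
  proof (elim disjE)
    assume "a < r" "b < r" then show ?thesis using e r by simp
  next
    assume "a \<ge> r" "b \<ge> r" then show ?thesis using e r by simp
  next
    assume "a < r" "b \<ge> r"
    then have "2 * a + 1 = 2 * b - 2 * r" using e r by simp
    then show ?thesis by presburger
  next
    assume "a \<ge> r" "b < r"
    then have "2 * b + 1 = 2 * a - 2 * r" using e r by simp
    then show ?thesis by presburger
  qed
qed

lemma mod_inj_suc:
  assumes "(a::nat) < p" "b < p" "(a + 1) mod p = (b + 1) mod p" shows "a = b"
proof -
  have "a + 1 < 2 * p" "b + 1 < 2 * p" using assms by auto
  with assms(3) show ?thesis using assms(1,2) unfolding mod_lt2[OF \<open>a + 1 < 2 * p\<close>] mod_lt2[OF \<open>b + 1 < 2 * p\<close>]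
    by (auto split: if_splits)
qed

lemma addp_self_inj:
  assumes "odd p" "xs \<in> V p m" "ys \<in> V p m" "addp p xs xs = addp p ys ys" shows "xs = ys"
  using assms
proof (induction xs arbitrary: ys m)
  case Nil then show ?case by (simp add: V_def)
next
  case (Cons a xs)
  then obtain m' where m: "m = Suc m'" by (cases m) (auto simp: V_def)
  from Cons.prems(3) m obtain b ys' where ys: "ys = b # ys'" "b < p" "ys' \<in> V p m'" by (auto elim: V_Suc_cases)
  have a: "a < p" "xs \<in> V p m'" using Cons.prems(2) m by (auto simp: Cons_in_V)
  have "(a + a) mod p = (b + b) mod p" "addp p xs xs = addp p ys' ys'" using Cons.prems(4) ys by auto
  then have "a = b" using mod_inj_double[OF \<open>odd p\<close> a(1) ys(2)] by (simp add: mult_2)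
  moreover have "xs = ys'" using Cons.IH[OF \<open>odd p\<close> a(2) ys(3)] \<open>addp p xs xs = addp p ys' ys'\<close> by simp
  ultimately show ?case using ys by simp
qed

lemma endo_bij: "finite A \<Longrightarrow> f ` A \<subseteq> A \<Longrightarrow> inj_on f A \<Longrightarrow> bij_betw f A A"
  by (simp add: bij_betw_def endo_inj_surj)

lemma cmV_perm: "cmV p m g \<Longrightarrow> g permutes V p m"
  by (simp add: cmV_def)

lemma cmV_bij2: "cmV p m g \<Longrightarrow> bij_betw (\<lambda>x. addp p (g x) x) (V p m) (V p m)"
  by (simp add: cmV_def)

lemma cmV_in: "cmV p m g \<Longrightarrow> x \<in> V p m \<Longrightarrow> g x \<in> V p m"
  by (simp add: permutes_in_image[OF cmV_perm])

lemma cmV_inj: "cmV p m g \<Longrightarrow> x \<in> V p m \<Longrightarrow> y \<in> V p m \<Longrightarrow> g x = g y \<Longrightarrow> x = y"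
  by (rule injD[OF permutes_inj[OF cmV_perm]])

lemma cmV_inj2: "cmV p m g \<Longrightarrow> x \<in> V p m \<Longrightarrow> y \<in> V p m \<Longrightarrow>
   addp p (g x) x = addp p (g y) y \<Longrightarrow> x = y"
  by (rule inj_onD[OF bij_betw_imp_inj_on[OF cmV_bij2]])


section \<open>Direct sum construction\<close>

definition dsum :: "nat \<Rightarrow> nat \<Rightarrow> (nat \<Rightarrow> nat list \<Rightarrow> nat list) \<Rightarrow> nat list \<Rightarrow> nat list" where
  "dsum p m G x = (if x \<in> V p (Suc m) then hd x # G (hd x) (tl x) else x)"

lemma dsum_Cons: "i < p \<Longrightarrow> xs \<in> V p m \<Longrightarrow> dsum p m G (i # xs) = i # G i xs"
  unfolding dsum_def by (simp add: Cons_in_V)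

lemma dsum_cm:
  assumes p: "odd p" and G: "\<And>i. i < p \<Longrightarrow> cmV p m (G i)"
  shows "cmV p (Suc m) (dsum p m G)"
proof -
  have p0: "0 < p" using p by (simp add: odd_pos)
  have img: "dsum p m G ` V p (Suc m) \<subseteq> V p (Suc m)"
  proof
    fix y assume "y \<in> dsum p m G ` V p (Suc m)"
    then obtain x where x: "x \<in> V p (Suc m)" "y = dsum p m G x" by blast
    from x(1) obtain i xs where xi: "x = i # xs" "i < p" "xs \<in> V p m" by (rule V_Suc_cases)
    have "y = i # G i xs" using x(2) dsum_Cons[OF xi(2,3)] xi(1) by simp
    moreover have "G i xs \<in> V p m" using cmV_in[OF G[OF xi(2)] xi(3)] .
    ultimately show "y \<in> V p (Suc m)" using xi(2) by (simp add: Cons_in_V)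
  qed
  have inj: "inj_on (dsum p m G) (V p (Suc m))"
  proof (rule inj_onI)
    fix x y assume x: "x \<in> V p (Suc m)" and y: "y \<in> V p (Suc m)" and eq: "dsum p m G x = dsum p m G y"
    from x obtain i xs where xi: "x = i # xs" "i < p" "xs \<in> V p m" by (rule V_Suc_cases)
    from y obtain j ys where yj: "y = j # ys" "j < p" "ys \<in> V p m" by (rule V_Suc_cases)
    have hx: "dsum p m G x = i # G i xs" using dsum_Cons[OF xi(2,3)] xi(1) by simp
    have hy: "dsum p m G y = j # G j ys" using dsum_Cons[OF yj(2,3)] yj(1) by simp
    have "i # G i xs = j # G j ys" using eq unfolding hx hy .
    then have "i = j" "G i xs = G i ys" by auto
    then have "xs = ys" using cmV_inj[OF G[OF xi(2)] xi(3) yj(3)] by blast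
    then show "x = y" using xi yj \<open>i = j\<close> by simp
  qed
  have perm: "dsum p m G permutes V p (Suc m)"
    by (rule bij_imp_permutes[OF endo_bij[OF finite_V img inj]]) (simp add: dsum_def)
  let ?h = "\<lambda>x. addp p (dsum p m G x) x"
  have img2: "?h ` V p (Suc m) \<subseteq> V p (Suc m)"
  proof (rule image_subsetI)
    fix x assume x: "x \<in> V p (Suc m)"
    then have "dsum p m G x \<in> V p (Suc m)" using img by blast
    then show "?h x \<in> V p (Suc m)" using addp_in_V[OF p0 _ x] by blast
  qed
  have inj2: "inj_on ?h (V p (Suc m))"
  proof (rule inj_onI)
    fix x y assume x: "x \<in> V p (Suc m)" and y: "y \<in> V p (Suc m)" and eq: "?h x = ?h y"
    from x obtain i xs where xi: "x = i # xs" "i < p" "xs \<in> V p m" by (rule V_Suc_cases)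
    from y obtain j ys where yj: "y = j # ys" "j < p" "ys \<in> V p m" by (rule V_Suc_cases)
    have hx: "?h x = ((i + i) mod p) # addp p (G i xs) xs" using xi by (simp add: dsum_Cons)
    have hy: "?h y = ((j + j) mod p) # addp p (G j ys) ys" using yj by (simp add: dsum_Cons)
    from eq have "(i + i) mod p = (j + j) mod p" "addp p (G i xs) xs = addp p (G j ys) ys"
      unfolding hx hy by simp_all
    then have "(2 * i) mod p = (2 * j) mod p" by (simp add: mult_2)
    then have "i = j" by (rule mod_inj_double[OF p xi(2) yj(2)])
    with \<open>addp p (G i xs) xs = addp p (G j ys) ys\<close> have "addp p (G i xs) xs = addp p (G i ys) ys" by simp
    then have "xs = ys" by (rule cmV_inj2[OF G[OF xi(2)] xi(3) yj(3)])
    then show "x = y" using xi yj \<open>i = j\<close> by simp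
  qed
  show ?thesis unfolding cmV_def using perm endo_bij[OF finite_V img2 inj2] by (rule conjI)
qed

lemma dsum_ct:
  assumes p: "odd p" and G: "\<And>i. i < p \<Longrightarrow> cmV p m (G i)"
  shows "cycle_type (dsum p m G) (V p (Suc m)) l = (\<Sum>i<p. cycle_type (G i) (V p m) l)"
proof -
  let ?f = "dsum p m G"
  have "cmV p (Suc m) ?f" by (rule dsum_cm[OF p]) (rule G)
  then have perm: "?f permutes V p (Suc m)" unfolding cmV_def by blast
  have permG: "G i permutes V p m" if "i < p" for i using G[OF that] unfolding cmV_def by blast
  have bij: "bij_betw (Cons i) (V p m) (Cons i ` V p m)" for i by (simp add: bij_betw_def)
  have eq: "?f (Cons i x) = Cons i (G i x)" if "i < p" "x \<in> V p m" for i x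
    using dsum_Cons[OF that] .
  have "cycle_type ?f (\<Union>i\<in>{..<p}. Cons i ` V p m) l = (\<Sum>i\<in>{..<p}. cycle_type ?f (Cons i ` V p m) l)"
  proof (rule cycle_type_UN)
    show "disjoint_family_on (\<lambda>i. Cons i ` V p m) {..<p}" by (auto simp: disjoint_family_on_def)
    show "finite {..<p}" by simp
    show "\<And>i. i \<in> {..<p} \<Longrightarrow> finite (Cons i ` V p m)" using finite_V by blast
    fix i y assume i: "i \<in> {..<p}" and y: "y \<in> Cons i ` V p m"
    have i': "i < p" using i by simp
    from y obtain x where x: "y = i # x" "x \<in> V p m" by blast
    have eqi: "\<And>z. z \<in> V p m \<Longrightarrow> ?f (Cons i z) = Cons i (G i z)" using eq[OF i'] by blast
    have o1: "orbit ?f y = Cons i ` orbit (G i) x"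
      unfolding x(1) by (rule orbit_conj[where g="G i" and A="V p m" and g'="?f" and h="Cons i", OF permG[OF i'] finite_V x(2) eqi])
    have o2: "orbit (G i) x \<subseteq> V p m" using permutes_orbit_subset[OF permG[OF i'] x(2)] .
    have o3: "x \<in> orbit (G i) x"
    proof (rule permutation_self_in_orbit)
      show "permutation (G i)" unfolding permutation_permutes using permG[OF i'] finite_V by blast
    qed
    show "y \<in> orbit ?f y \<and> orbit ?f y \<subseteq> Cons i ` V p m"
      unfolding o1 unfolding x(1) by (intro conjI imageI image_mono o3 o2)
  qed
  also have "\<dots> = (\<Sum>i<p. cycle_type (G i) (V p m) l)"
  proof (rule sum.cong[OF refl])
    fix i assume "i \<in> {..<p}"
    then have i': "i < p" by simp
    have eqi: "\<And>z. z \<in> V p m \<Longrightarrow> ?f (Cons i z) = Cons i (G i z)" using eq[OF i'] by blast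
    show "cycle_type ?f (Cons i ` V p m) l = cycle_type (G i) (V p m) l"
      by (rule cycle_type_conj[where g="G i" and A="V p m" and g'="?f" and h="Cons i", OF permG[OF i'] finite_V bij eqi])
  qed
  finally show ?thesis unfolding V_Suc .
qed



section \<open>Single cycle construction\<close>

definition cstep :: "nat \<Rightarrow> nat \<Rightarrow> (nat list \<Rightarrow> nat list) \<Rightarrow> nat list \<Rightarrow> nat list" where
  "cstep p m g x = (if x \<in> V p (Suc m)
     then ((hd x + 1) mod p) # (if hd x = 0 then g (tl x) else tl x) else x)"

lemma cstep_Cons: "i < p \<Longrightarrow> xs \<in> V p m \<Longrightarrow>
    cstep p m g (i # xs) = ((i + 1) mod p) # (if i = 0 then g xs else xs)"
  unfolding cstep_def by (simp add: Cons_in_V)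

lemma cstep_cm:
  assumes p: "odd p" and g: "cmV p m g"
  shows "cmV p (Suc m) (cstep p m g)"
proof -
  have p0: "0 < p" using p by (simp add: odd_pos)
  let ?f = "cstep p m g"
  have img: "?f ` V p (Suc m) \<subseteq> V p (Suc m)"
  proof (rule image_subsetI)
    fix x assume x: "x \<in> V p (Suc m)"
    from x obtain i xs where xi: "x = i # xs" "i < p" "xs \<in> V p m" by (rule V_Suc_cases)
    have "?f x = ((i + 1) mod p) # (if i = 0 then g xs else xs)" using cstep_Cons[OF xi(2,3)] xi(1) by simp
    moreover have "(if i = 0 then g xs else xs) \<in> V p m" using cmV_in[OF g xi(3)] xi(3) by simp
    moreover have "(i + 1) mod p < p" using p0 by simp
    ultimately show "?f x \<in> V p (Suc m)" by (simp add: Cons_in_V)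
  qed
  have inj: "inj_on ?f (V p (Suc m))"
  proof (rule inj_onI)
    fix x y assume x: "x \<in> V p (Suc m)" and y: "y \<in> V p (Suc m)" and eq: "?f x = ?f y"
    from x obtain i xs where xi: "x = i # xs" "i < p" "xs \<in> V p m" by (rule V_Suc_cases)
    from y obtain j ys where yj: "y = j # ys" "j < p" "ys \<in> V p m" by (rule V_Suc_cases)
    have hx: "?f x = ((i + 1) mod p) # (if i = 0 then g xs else xs)" using cstep_Cons[OF xi(2,3)] xi(1) by simp
    have hy: "?f y = ((j + 1) mod p) # (if j = 0 then g ys else ys)" using cstep_Cons[OF yj(2,3)] yj(1) by simp
    have e: "((i + 1) mod p) # (if i = 0 then g xs else xs) = ((j + 1) mod p) # (if j = 0 then g ys else ys)"
      using eq unfolding hx hy .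
    then have "(i + 1) mod p = (j + 1) mod p" by simp
    then have ij: "i = j" by (rule mod_inj_suc[OF xi(2) yj(2)])
    have "xs = ys"
    proof (cases "i = 0")
      case True
      then have "g xs = g ys" using e ij by simp
      then show ?thesis by (rule cmV_inj[OF g xi(3) yj(3)])
    next
      case False
      then show ?thesis using e ij by simp
    qed
    then show "x = y" using xi(1) yj(1) ij by simp
  qed
  have perm: "?f permutes V p (Suc m)"
    by (rule bij_imp_permutes[OF endo_bij[OF finite_V img inj]]) (simp add: cstep_def)
  let ?h = "\<lambda>x. addp p (?f x) x"
  have img2: "?h ` V p (Suc m) \<subseteq> V p (Suc m)"
  proof (rule image_subsetI)
    fix x assume x: "x \<in> V p (Suc m)"
    then have "?f x \<in> V p (Suc m)" using img by blast
    then show "?h x \<in> V p (Suc m)" using addp_in_V[OF p0 _ x] by blast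
  qed
  have inj2: "inj_on ?h (V p (Suc m))"
  proof (rule inj_onI)
    fix x y assume x: "x \<in> V p (Suc m)" and y: "y \<in> V p (Suc m)" and eq: "?h x = ?h y"
    from x obtain i xs where xi: "x = i # xs" "i < p" "xs \<in> V p m" by (rule V_Suc_cases)
    from y obtain j ys where yj: "y = j # ys" "j < p" "ys \<in> V p m" by (rule V_Suc_cases)
    have md: "((a + 1) mod p + a) mod p = (2 * a + 1) mod p" for a :: nat
      by (simp add: mod_add_left_eq mult_2)
    have hx: "?h x = ((2 * i + 1) mod p) # addp p (if i = 0 then g xs else xs) xs"
      using cstep_Cons[OF xi(2,3)] xi(1) md by simp
    have hy: "?h y = ((2 * j + 1) mod p) # addp p (if j = 0 then g ys else ys) ys"
      using cstep_Cons[OF yj(2,3)] yj(1) md by simp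
    have e: "((2 * i + 1) mod p) # addp p (if i = 0 then g xs else xs) xs
       = ((2 * j + 1) mod p) # addp p (if j = 0 then g ys else ys) ys"
      using eq unfolding hx hy .
    then have "(2 * i + 1) mod p = (2 * j + 1) mod p" by simp
    then have ij: "i = j" by (rule mod_inj_double1[OF p xi(2) yj(2)])
    have "xs = ys"
    proof (cases "i = 0")
      case True
      then have "addp p (g xs) xs = addp p (g ys) ys" using e ij by simp
      then show ?thesis by (rule cmV_inj2[OF g xi(3) yj(3)])
    next
      case False
      then have "addp p xs xs = addp p ys ys" using e ij by simp
      then show ?thesis by (rule addp_self_inj[OF p xi(3) yj(3)])
    qed
    then show "x = y" using xi(1) yj(1) ij by simp
  qed
  show ?thesis unfolding cmV_def using perm endo_bij[OF finite_V img2 inj2] by (rule conjI)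
qed

lemma cstep_orbit:
  assumes p: "odd p" "1 < p" and g: "cmV p m g" and cyc: "\<And>x. x \<in> V p m \<Longrightarrow> orbit g x = V p m"
    and y: "y \<in> V p (Suc m)"
  shows "orbit (cstep p m g) y = V p (Suc m)"
proof -
  let ?f = "cstep p m g"
  have gp: "g permutes V p m" using cmV_perm[OF g] .
  have perm: "?f permutes V p (Suc m)" using cmV_perm[OF cstep_cm[OF p(1) g]] .
  have F1: "(?f ^^ j) (0 # ys) = j # g ys" if "ys \<in> V p m" "1 \<le> j" "j < p" for ys j
    using that(2,3)
  proof (induction j)
    case 0 then show ?case by simp
  next
    case (Suc j)
    have gys: "g ys \<in> V p m" using cmV_in[OF g that(1)] .
    show ?case
    proof (cases "j = 0")
      case True
      then show ?thesis using cstep_Cons[OF _ that(1), of 0 g] p(2) by simp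
    next
      case False
      then have "(?f ^^ j) (0 # ys) = j # g ys" using Suc by simp
      then have "(?f ^^ Suc j) (0 # ys) = ?f (j # g ys)" by simp
      also have "\<dots> = ((j + 1) mod p) # g ys" using cstep_Cons[OF _ gys, of j g] Suc.prems False by simp
      also have "\<dots> = Suc j # g ys" using Suc.prems by simp
      finally show ?thesis .
    qed
  qed
  have F2: "(?f ^^ p) (0 # ys) = 0 # g ys" if ys: "ys \<in> V p m" for ys
  proof -
    have gys: "g ys \<in> V p m" using cmV_in[OF g ys] .
    have pe: "p = Suc (p - 1)" using p(2) by simp
    have "(?f ^^ p) (0 # ys) = ?f ((?f ^^ (p - 1)) (0 # ys))" by (subst pe) simp
    also have "\<dots> = ?f ((p - 1) # g ys)" using F1[OF ys, of "p - 1"] p(2) by simp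
    also have "\<dots> = (p mod p) # g ys" using cstep_Cons[OF _ gys, of "p - 1" g] p(2) by simp
    finally show ?thesis by simp
  qed
  have F3: "(?f ^^ (p * n)) (0 # ys) = 0 # (g ^^ n) ys" if ys: "ys \<in> V p m" for ys n
  proof (induction n)
    case 0 then show ?case by simp
  next
    case (Suc n)
    have gn: "(g ^^ n) ys \<in> V p m" using permutes_in_image[OF permutes_funpow[OF gp]] ys by blast
    have "(?f ^^ (p * Suc n)) (0 # ys) = (?f ^^ p) ((?f ^^ (p * n)) (0 # ys))"
      by (simp add: funpow_add)
    also have "\<dots> = 0 # g ((g ^^ n) ys)" using Suc.IH F2[OF gn] by simp
    finally show ?case by simp
  qed
  define ys0 where "ys0 = replicate m (0::nat)"
  have ys0: "ys0 \<in> V p m" unfolding ys0_def V_def using p(2) by auto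
  have A: "0 # zs \<in> orbit ?f (0 # ys0)" if zs: "zs \<in> V p m" for zs
  proof -
    have "zs \<in> orbit g ys0" using cyc[OF ys0] zs by simp
    then obtain n where n: "zs = (g ^^ n) ys0" "0 < n" unfolding orbit_altdef by blast
    have "0 # zs = (?f ^^ (p * n)) (0 # ys0)" using F3[OF ys0] n by simp
    moreover have "0 < p * n" using n(2) p(2) by simp
    ultimately show ?thesis unfolding orbit_altdef by blast
  qed
  have B: "j # w \<in> orbit ?f (0 # ys0)" if j: "1 \<le> j" "j < p" and w: "w \<in> V p m" for j w
  proof -
    have "w \<in> g ` V p m" using permutes_image[OF gp] w by simp
    then obtain zs where zs: "zs \<in> V p m" "w = g zs" by blast
    have "j # w = (?f ^^ j) (0 # zs)" using F1[OF zs(1) j] zs(2) by simp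
    then have "j # w \<in> orbit ?f (0 # zs)" unfolding orbit_altdef using j(1) by force
    then show ?thesis using A[OF zs(1)] orbit_trans by fast
  qed
  have sub: "V p (Suc m) \<subseteq> orbit ?f (0 # ys0)"
  proof
    fix x assume "x \<in> V p (Suc m)"
    then obtain i xs where xi: "x = i # xs" "i < p" "xs \<in> V p m" by (rule V_Suc_cases)
    show "x \<in> orbit ?f (0 # ys0)"
    proof (cases "i = 0")
      case True then show ?thesis using A[OF xi(3)] xi(1) by simp
    next
      case False then show ?thesis using B[of i xs] xi by simp
    qed
  qed
  have z: "0 # ys0 \<in> V p (Suc m)" using ys0 p(2) by (simp add: Cons_in_V)
  have "orbit ?f (0 # ys0) = V p (Suc m)"
    using sub permutes_orbit_subset[OF perm z] by blast
  then have "cyclic_on ?f (V p (Suc m))" by (intro cyclic_on_singleI[OF z]) (rule sym)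
  then show ?thesis by (rule orbit_cyclic_eq3[OF _ y])
qed



primrec cyc :: "nat \<Rightarrow> nat \<Rightarrow> nat list \<Rightarrow> nat list" where
  "cyc p 0 = id"
| "cyc p (Suc m) = cstep p m (cyc p m)"

lemma cyc_props:
  assumes p: "odd p" "1 < p"
  shows "cmV p m (cyc p m) \<and> (\<forall>x\<in>V p m. orbit (cyc p m) x = V p m)"
proof (induction m)
  case 0
  have "bij_betw (\<lambda>x. addp p (id x) x) {[]} {[]}" by (simp add: bij_betw_def)
  then have "cmV p 0 id" unfolding cmV_def V_0 by (simp add: permutes_id)
  moreover have "orbit id [] = {[]}" by (simp add: orbit_eq_singleton_iff)
  ultimately show ?case by (simp add: V_0 id_def)
next
  case (Suc m)
  then have "cmV p (Suc m) (cyc p (Suc m))" using cstep_cm[OF p(1)] by simp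
  moreover have "\<forall>x\<in>V p (Suc m). orbit (cyc p (Suc m)) x = V p (Suc m)"
    using cstep_orbit[OF p, of m "cyc p m"] Suc by simp
  ultimately show ?case by blast
qed

lemma cyc_ct:
  assumes p: "odd p" "1 < p"
  shows "cycle_type (cyc p m) (V p m) l = (if l = p ^ m then 1 else 0)"
proof -
  have o: "\<And>x. x \<in> V p m \<Longrightarrow> orbit (cyc p m) x = V p m" using cyc_props[OF p] by blast
  have ne: "replicate m 0 \<in> V p m" unfolding V_def using p(2) by auto
  let ?S = "{orbit (cyc p m) x |x. x \<in> V p m \<and> card (orbit (cyc p m) x) = l}"
  have hS: "?S = (if p ^ m = l then {V p m} else {})"
  proof (cases "p ^ m = l")
    case True
    have "V p m \<in> ?S"
      by (intro CollectI exI[of _ "replicate m 0"]) (simp add: o[OF ne] ne card_V True)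
    moreover have "?S \<subseteq> {V p m}" using o by auto
    ultimately show ?thesis using True by auto
  next
    case False
    then show ?thesis using o card_V[of p m] by auto
  qed
  show ?thesis
  proof (cases "p ^ m = l")
    case True
    then have c: "card ?S = 1" unfolding hS by simp
    have "cycle_type (cyc p m) (V p m) l = card ?S" by (simp only: cycle_type_def)
    then have "cycle_type (cyc p m) (V p m) l = 1" using c by simp
    then show ?thesis using True by simp
  next
    case False
    then have c: "card ?S = 0" unfolding hS by simp
    have "cycle_type (cyc p m) (V p m) l = card ?S" by (simp only: cycle_type_def)
    then have "cycle_type (cyc p m) (V p m) l = 0" using c by (rule trans)
    then show ?thesis using False by auto
  qed
qed

section \<open>Multisets of prime powers\<close>

lemma mem_le_sum_mset:
  assumes "(x::nat) \<in># M" shows "x \<le> sum_mset M"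
proof -
  obtain N where "M = add_mset x N" using multi_member_split[OF assms] by blast
  then show ?thesis by simp
qed

lemma mset_add_sub: "(M''::'a multiset) \<subseteq># M - M' \<Longrightarrow> M' \<subseteq># M \<Longrightarrow> M' + M'' \<subseteq># M"
  by (metis subset_mset.le_diff_conv2 add.commute)

lemma extract_pow:
  assumes p: "prime (p::nat)"
  shows "\<forall>x\<in>#M. \<exists>j\<le>n. x = p ^ j \<Longrightarrow> p ^ n \<le> sum_mset M \<Longrightarrow> \<exists>M'. M' \<subseteq># M \<and> sum_mset M' = p ^ n"
proof (induction n arbitrary: M)
  case 0
  then have "M \<noteq> {#}" by auto
  then obtain x where x: "x \<in># M" by blast
  then have "x = 1" using 0 by auto
  then show ?case using x by (intro exI[of _ "{#x#}"]) auto
next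
  case (Suc n)
  note IH = Suc.IH
  show ?case
  proof (cases "p ^ Suc n \<in># M")
    case True then show ?thesis by (intro exI[of _ "{#p ^ Suc n#}"]) auto
  next
    case False
    have le: "\<forall>x\<in>#M. \<exists>j\<le>n. x = p ^ j"
    proof
      fix x assume x: "x \<in># M"
      then obtain j where j: "j \<le> Suc n" "x = p ^ j" using Suc.prems(1) by blast
      then have "j \<noteq> Suc n" using False x by auto
      then have "j \<le> n" using j by simp
      then show "\<exists>j\<le>n. x = p ^ j" using j(2) by blast
    qed
    have "\<exists>M'. M' \<subseteq># M \<and> sum_mset M' = c * p ^ n" if "c \<le> p" for c
      using that
    proof (induction c)
      case 0 then show ?case by (intro exI[of _ "{#}"]) auto
    next
      case (Suc c)
      then obtain M' where M': "M' \<subseteq># M" "sum_mset M' = c * p ^ n" by auto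
      have s: "sum_mset (M - M') = sum_mset M - c * p ^ n" using sum_mset_diff[OF M'(1)] M'(2) by simp
      have "Suc c * p ^ n \<le> p * p ^ n" using Suc.prems by (intro mult_right_mono) auto
      then have "c * p ^ n + p ^ n \<le> sum_mset M" using \<open>p ^ Suc n \<le> sum_mset M\<close> by simp
      then have "p ^ n \<le> sum_mset (M - M')" using s by simp
      moreover have "\<forall>x\<in>#M - M'. \<exists>j\<le>n. x = p ^ j" using le by (meson in_diffD)
      ultimately obtain M'' where M'': "M'' \<subseteq># M - M'" "sum_mset M'' = p ^ n" using IH by blast
      have "M' + M'' \<subseteq># M" using mset_add_sub[OF M''(1) M'(1)] .
      moreover have "sum_mset (M' + M'') = Suc c * p ^ n" using M'(2) M''(2) by simp
      ultimately show ?case by blast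
    qed
    from this[of p] show ?thesis by auto
  qed
qed

lemma split_mset:
  assumes p: "prime (p::nat)"
  shows "\<forall>x\<in>#M. \<exists>j\<le>n. x = p ^ j \<Longrightarrow> sum_mset M = a * p ^ n \<Longrightarrow>
    \<exists>Ms. (\<forall>i<a. sum_mset (Ms i) = p ^ n \<and> set_mset (Ms i) \<subseteq> set_mset M) \<and> M = (\<Sum>i<a. Ms i)"
proof (induction a arbitrary: M)
  case 0
  have "\<forall>x\<in>#M. x = 0" using 0 sum_mset_0_iff by auto
  moreover have "\<forall>x\<in>#M. x \<noteq> 0" using 0(1) p by (auto simp: prime_gt_0_nat)
  ultimately have "M = {#}" by (metis multiset_nonemptyE)
  then show ?case by (intro exI[of _ "\<lambda>_. {#}"]) auto
next
  case (Suc a)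
  have "p ^ n \<le> sum_mset M" using Suc.prems(2) by simp
  then obtain M' where M': "M' \<subseteq># M" "sum_mset M' = p ^ n" using extract_pow[OF p Suc.prems(1)] by blast
  have s: "sum_mset (M - M') = a * p ^ n" using sum_mset_diff[OF M'(1)] M'(2) Suc.prems(2) by simp
  have "\<forall>x\<in>#M - M'. \<exists>j\<le>n. x = p ^ j" using Suc.prems(1) by (meson in_diffD)
  then obtain Ms where Ms: "\<forall>i<a. sum_mset (Ms i) = p ^ n \<and> set_mset (Ms i) \<subseteq> set_mset (M - M')"
      "M - M' = (\<Sum>i<a. Ms i)" using Suc.IH s by blast
  let ?Ms = "Ms(a := M')"
  have "\<forall>i<Suc a. sum_mset (?Ms i) = p ^ n \<and> set_mset (?Ms i) \<subseteq> set_mset M"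
  proof (intro allI impI)
    fix i assume "i < Suc a"
    show "sum_mset (?Ms i) = p ^ n \<and> set_mset (?Ms i) \<subseteq> set_mset M"
    proof (cases "i = a")
      case True then show ?thesis using M' by (simp add: set_mset_mono)
    next
      case False
      then have "i < a" using \<open>i < Suc a\<close> by simp
      then show ?thesis using Ms(1) False by (auto dest: in_diffD)
    qed
  qed
  moreover
  have e1: "(\<Sum>i<Suc a. ?Ms i) = (\<Sum>i<a. Ms i) + M'" by simp
  have e2: "M - M' + M' = M" by (rule subset_mset.diff_add[OF M'(1)])
  have "(\<Sum>i<Suc a. ?Ms i) = M" using e1 e2 Ms(2) by simp
  ultimately show ?case by blast
qed



lemma main_model:
  assumes p: "prime (p::nat)" "odd p"
  shows "\<forall>x\<in>#M. \<exists>j. x = p ^ j \<Longrightarrow> sum_mset M = p ^ m \<Longrightarrow>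
    \<exists>g. cmV p m g \<and> (\<forall>l. cycle_type g (V p m) l = count M l)"
proof (induction m arbitrary: M)
  case 0
  note prems = 0
  have p1: "1 < p" using p(1) prime_gt_1_nat by blast
  have pos: "\<forall>x\<in>#M. 0 < x" using prems(1) p1 by auto
  have single: "M = {#q#}" if q: "q \<in># M" "q = sum_mset M" for q
  proof -
    obtain N where N: "M = add_mset q N" using multi_member_split[OF q(1)] by blast
    then have "sum_mset M = q + sum_mset N" by simp
    then have "sum_mset N = 0" using q(2) by linarith
    then have "N = {#}" using pos N by (metis sum_mset_0_iff multiset_nonemptyE union_iff not_less0 add_mset_add_single)
    then show ?thesis using N by simp
  qed
  have "M \<noteq> {#}" using prems(2) by auto
  then obtain x where x: "x \<in># M" by blast
  then obtain j where j: "x = p ^ j" using prems(1) by blast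
  have "x \<le> 1" using mem_le_sum_mset[OF x] prems(2) by simp
  then have "j = 0" using one_less_power[OF p1, of j] j by (metis neq0_conv not_less)
  then have "x = 1" using j by simp
  then have M: "M = {#1#}" using single[of 1] x prems(2) by simp
  have "cmV p 0 (cyc p 0)" using cyc_props[OF p(2) p1] by blast
  moreover have "\<forall>l. cycle_type (cyc p 0) (V p 0) l = count M l"
    using cyc_ct[OF p(2) p1, of 0] M by simp
  ultimately show ?case by blast
next
  case (Suc m)
  note prems = Suc.prems
  have p1: "1 < p" using p(1) prime_gt_1_nat by blast
  have pos: "\<forall>x\<in>#M. 0 < x" using prems(1) p1 by auto
  show ?case
  proof (cases "p ^ Suc m \<in># M")
    case True
    obtain N where N: "M = add_mset (p ^ Suc m) N" using multi_member_split[OF True] by blast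
    then have "sum_mset N = 0" using prems(2) by simp
    then have "N = {#}" using pos N by (metis sum_mset_0_iff multiset_nonemptyE union_iff not_less0 add_mset_add_single)
    then have M: "M = {#p ^ Suc m#}" using N by simp
    have "cmV p (Suc m) (cyc p (Suc m))" using cyc_props[OF p(2) p1] by blast
    moreover have "\<forall>l. cycle_type (cyc p (Suc m)) (V p (Suc m)) l = count M l"
      using cyc_ct[OF p(2) p1, of "Suc m"] M by simp
    ultimately show ?thesis by blast
  next
    case False
    have le: "\<forall>x\<in>#M. \<exists>j\<le>m. x = p ^ j"
    proof
      fix x assume x: "x \<in># M"
      then obtain j where j: "x = p ^ j" using prems(1) by blast
      have "p ^ j \<le> p ^ Suc m" using mem_le_sum_mset[OF x] prems(2) j by simp
      then have "j \<le> Suc m" using power_le_imp_le_exp[OF p1] by blast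
      moreover have "j \<noteq> Suc m" using False x j by auto
      ultimately have "j \<le> m" by simp
      then show "\<exists>j\<le>m. x = p ^ j" using j by blast
    qed
    have "sum_mset M = p * p ^ m" using prems(2) by simp
    then obtain Ms where Ms: "\<forall>i<p. sum_mset (Ms i) = p ^ m \<and> set_mset (Ms i) \<subseteq> set_mset M"
      "M = (\<Sum>i<p. Ms i)" using split_mset[OF p(1) le] by blast
    have "\<forall>i\<in>{..<p}. \<exists>g. cmV p m g \<and> (\<forall>l. cycle_type g (V p m) l = count (Ms i) l)"
    proof
      fix i assume "i \<in> {..<p}"
      then have i: "i < p" by simp
      have "\<forall>x\<in>#Ms i. \<exists>j. x = p ^ j" using Ms(1) i prems(1) by blast
      moreover have "sum_mset (Ms i) = p ^ m" using Ms(1) i by blast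
      ultimately show "\<exists>g. cmV p m g \<and> (\<forall>l. cycle_type g (V p m) l = count (Ms i) l)"
        using Suc.IH by blast
    qed
    then obtain G where G: "\<forall>i\<in>{..<p}. cmV p m (G i) \<and> (\<forall>l. cycle_type (G i) (V p m) l = count (Ms i) l)"
      by (rule bchoice[THEN exE]) blast
    have Gc: "\<And>i. i < p \<Longrightarrow> cmV p m (G i)" using G by blast
    have "cmV p (Suc m) (dsum p m G)" by (rule dsum_cm[OF p(2) Gc])
    moreover have "\<forall>l. cycle_type (dsum p m G) (V p (Suc m)) l = count M l"
    proof
      fix l
      have "cycle_type (dsum p m G) (V p (Suc m)) l = (\<Sum>i<p. cycle_type (G i) (V p m) l)"
        by (rule dsum_ct[OF p(2) Gc])
      also have "\<dots> = (\<Sum>i<p. count (Ms i) l)" using G by simp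
      also have "\<dots> = count M l" using Ms(2) by (simp add: count_sum)
      finally show "cycle_type (dsum p m G) (V p (Suc m)) l = count M l" .
    qed
    ultimately show ?thesis by blast
  qed
qed



section \<open>Transport to a finite field\<close>

lemma addp_zero: "addp p (replicate m 0) (replicate m 0) = replicate m 0"
  by (induction m) simp_all

lemma of_nat_mod_CHAR: "of_nat (n mod CHAR('a)) = (of_nat n :: 'a::semiring_1_cancel)"
  by (simp add: of_nat_eq_iff_cong_CHAR cong_def)

lemma basis_exists:
  fixes p :: nat
  assumes p: "prime p" and ch: "CHAR('a::{field,finite}) = p"
    and card: "card (UNIV :: 'a set) = p ^ k"
  shows "m \<le> k \<Longrightarrow> \<exists>\<phi> :: nat list \<Rightarrow> 'a. inj_on \<phi> (V p m) \<and>
     (\<forall>x\<in>V p m. \<forall>y\<in>V p m. \<phi> (addp p x y) = \<phi> x + \<phi> y)"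
proof (induction m)
  case 0
  show ?case by (intro exI[of _ "\<lambda>_. 0"]) (simp add: V_0)
next
  case (Suc m)
  have p1: "1 < p" using p prime_gt_1_nat by blast
  then obtain \<phi> :: "nat list \<Rightarrow> 'a" where inj: "inj_on \<phi> (V p m)"
    and add: "\<And>x y. x \<in> V p m \<Longrightarrow> y \<in> V p m \<Longrightarrow> \<phi> (addp p x y) = \<phi> x + \<phi> y"
    using Suc by auto
  let ?S = "\<phi> ` V p m"
  have "card ?S = p ^ m" using card_image[OF inj] card_V by simp
  moreover have "p ^ m < p ^ k" using Suc.prems p1 by (intro power_strict_increasing) auto
  ultimately have "?S \<noteq> UNIV" using card by auto
  then obtain b where b: "b \<notin> ?S" by blast
  have pz: "of_nat p = (0::'a)" using ch by (metis of_nat_CHAR)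
  have z: "replicate m 0 \<in> V p m" unfolding V_def using p1 by auto
  have S0: "0 \<in> ?S"
  proof -
    have "\<phi> (replicate m 0) = \<phi> (replicate m 0) + \<phi> (replicate m 0)"
      using add[OF z z] addp_zero by metis
    then have "\<phi> (replicate m 0) = 0" by (metis add.right_neutral add_left_cancel)
    then show ?thesis using z by (metis image_eqI)
  qed
  have Splus: "s + t \<in> ?S" if st: "s \<in> ?S" "t \<in> ?S" for s t
  proof -
    obtain x y where "x \<in> V p m" "y \<in> V p m" "s = \<phi> x" "t = \<phi> y" using st by blast
    then show ?thesis using add addp_in_V[of p x m y] p1 by (metis image_eqI less_trans zero_less_one)
  qed
  have Snat: "of_nat n * s \<in> ?S" if "s \<in> ?S" for s n
  proof (induction n)
    case 0 then show ?case using S0 by simp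
  next
    case (Suc n)
    have "of_nat (Suc n) * s = s + of_nat n * s" by (simp add: algebra_simps)
    then show ?case using Splus[OF that Suc.IH] by simp
  qed
  have Sneg: "- s \<in> ?S" if "s \<in> ?S" for s
  proof -
    have "of_nat (p - 1) + 1 = (of_nat p :: 'a)" using p1 by (simp add: of_nat_diff)
    then have "of_nat (p - 1) = (-1 :: 'a)" using pz by (simp add: eq_neg_iff_add_eq_0)
    then show ?thesis using Snat[OF that, of "p - 1"] by simp
  qed
  define \<psi> where "\<psi> xs = of_nat (hd xs) * b + \<phi> (tl xs)" for xs
  have \<psi>C: "\<psi> (i # xs) = of_nat i * b + \<phi> xs" for i xs by (simp add: \<psi>_def)
  have add': "\<psi> (addp p x y) = \<psi> x + \<psi> y" if x: "x \<in> V p (Suc m)" and y: "y \<in> V p (Suc m)" for x y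
  proof -
    from x obtain i xs where xi: "x = i # xs" "i < p" "xs \<in> V p m" by (rule V_Suc_cases)
    from y obtain j ys where yj: "y = j # ys" "j < p" "ys \<in> V p m" by (rule V_Suc_cases)
    have "\<psi> (addp p x y) = of_nat ((i + j) mod p) * b + \<phi> (addp p xs ys)" using xi yj by (simp add: \<psi>C)
    also have "\<dots> = (of_nat i + of_nat j) * b + (\<phi> xs + \<phi> ys)"
      using of_nat_mod_CHAR[of "i + j", where 'a='a] ch add[OF xi(3) yj(3)] by simp
    also have "\<dots> = \<psi> x + \<psi> y" using xi yj by (simp add: \<psi>C algebra_simps)
    finally show ?thesis .
  qed
  have inj': "inj_on \<psi> (V p (Suc m))"
  proof (rule inj_onI)
    fix x y assume x: "x \<in> V p (Suc m)" and y: "y \<in> V p (Suc m)" and eq: "\<psi> x = \<psi> y"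
    from x obtain i xs where xi: "x = i # xs" "i < p" "xs \<in> V p m" by (rule V_Suc_cases)
    from y obtain j ys where yj: "y = j # ys" "j < p" "ys \<in> V p m" by (rule V_Suc_cases)
    have e: "of_nat i * b + \<phi> xs = of_nat j * b + \<phi> ys" using eq xi yj by (simp add: \<psi>C)
    show "x = y"
    proof (cases "i = j")
      case True
      then have "\<phi> xs = \<phi> ys" using e by simp
      then have "xs = ys" using inj xi(3) yj(3) by (meson inj_onD)
      then show ?thesis using xi yj True by simp
    next
      case False
      define d where "d = i + (p - j)"
      have "of_nat (p - j) + of_nat j = (of_nat p :: 'a)" using yj(2) by (simp add: of_nat_diff)
      then have pj: "of_nat (p - j) = - (of_nat j :: 'a)" using pz by (simp add: eq_neg_iff_add_eq_0)
      have "of_nat d * b = \<phi> ys + - \<phi> xs"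
        using e unfolding d_def by (simp add: pj algebra_simps)
      moreover have "\<phi> ys + - \<phi> xs \<in> ?S" using Splus Sneg yj(3) xi(3) by blast
      ultimately have dS: "of_nat d * b \<in> ?S" by simp
      have nd: "\<not> p dvd d"
      proof
        assume "p dvd d"
        then obtain c where c: "d = p * c" by blast
        have "0 < d" "d < 2 * p" using xi(2) yj(2) False unfolding d_def by auto
        then have "p * c < p * 2" using c by (simp add: mult.commute)
        then have "c < 2" by simp
        moreover have "c \<noteq> 0" using \<open>0 < d\<close> c by simp
        ultimately have "c = 1" by simp
        then have "d = p" using c by simp
        then show False using False xi(2) yj(2) unfolding d_def by simp
      qed
      have "[d ^ (p - 1) = 1] (mod p)" by (rule fermat_theorem[OF p nd])
      then have "of_nat (d ^ (p - 1)) = (of_nat 1 :: 'a)" unfolding of_nat_eq_iff_cong_CHAR ch .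
      then have one: "of_nat d ^ (p - 2) * of_nat d = (1::'a)"
        using p1 by (metis of_nat_1 of_nat_power power_Suc2 Suc_diff_Suc numeral_2_eq_2 Suc_1 diff_Suc_1)
      have "of_nat (d ^ (p - 2)) * (of_nat d * b) = (of_nat d ^ (p - 2) * of_nat d) * b"
        by (simp add: mult.assoc)
      also have "\<dots> = b" using one by simp
      finally have "b = of_nat (d ^ (p - 2)) * (of_nat d * b)" by simp
      then have "b \<in> ?S" using Snat[OF dS, of "d ^ (p - 2)"] by (rule ssubst)
      then show ?thesis using b by simp
    qed
  qed
  show ?case using inj' add' by blast
qed

lemma transport:
  fixes p :: nat
  assumes p: "0 < p" and g: "cmV p k g"
    and \<phi>: "bij_betw (\<phi> :: nat list \<Rightarrow> 'a::field) (V p k) UNIV"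
    and add: "\<And>x y. x \<in> V p k \<Longrightarrow> y \<in> V p k \<Longrightarrow> \<phi> (addp p x y) = \<phi> x + \<phi> y"
  shows "\<exists>f :: 'a \<Rightarrow> 'a. complete_mapping f \<and> (\<forall>l. cycle_type f UNIV l = cycle_type g (V p k) l)"
proof -
  define \<psi> where "\<psi> = inv_into (V p k) \<phi>"
  have \<psi>: "bij_betw \<psi> UNIV (V p k)" unfolding \<psi>_def by (rule bij_betw_inv_into[OF \<phi>])
  have inj: "inj_on \<phi> (V p k)" using \<phi> bij_betw_def by blast
  have \<psi>\<phi>: "\<psi> (\<phi> x) = x" if "x \<in> V p k" for x unfolding \<psi>_def using inv_into_f_f[OF inj that] .
  have \<phi>\<psi>: "\<phi> (\<psi> a) = a" for a unfolding \<psi>_def using \<phi> by (simp add: bij_betw_def f_inv_into_f)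
  define f where "f = \<phi> \<circ> g \<circ> \<psi>"
  have gb: "bij_betw g (V p k) (V p k)" using cmV_perm[OF g] permutes_imp_bij by blast
  have "bij_betw (\<phi> \<circ> (g \<circ> \<psi>)) UNIV UNIV"
    by (rule bij_betw_trans[OF bij_betw_trans[OF \<psi> gb] \<phi>])
  then have fb: "bij_betw f UNIV UNIV" unfolding f_def by (simp add: comp_assoc)
  have "bij_betw (\<phi> \<circ> ((\<lambda>x. addp p (g x) x) \<circ> \<psi>)) UNIV UNIV"
    by (rule bij_betw_trans[OF bij_betw_trans[OF \<psi> cmV_bij2[OF g]] \<phi>])
  then have hb0: "bij_betw (\<phi> \<circ> (\<lambda>x. addp p (g x) x) \<circ> \<psi>) UNIV UNIV" by (simp add: comp_assoc)
  have "(\<lambda>x. f x + x) = \<phi> \<circ> (\<lambda>x. addp p (g x) x) \<circ> \<psi>"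
  proof
    fix a
    have "\<psi> a \<in> V p k" using \<psi> bij_betwE by blast
    then have "\<phi> (addp p (g (\<psi> a)) (\<psi> a)) = \<phi> (g (\<psi> a)) + \<phi> (\<psi> a)"
      using add cmV_in[OF g] by blast
    then show "f a + a = (\<phi> \<circ> (\<lambda>x. addp p (g x) x) \<circ> \<psi>) a" unfolding f_def using \<phi>\<psi>[of a] by simp
  qed
  then have hb: "bij_betw (\<lambda>x. f x + x) UNIV UNIV" using hb0 by simp
  have cm: "complete_mapping f" unfolding complete_mapping_def
  proof
    show "f permutes UNIV" by (rule bij_imp_permutes[OF fb]) simp
    show "(\<lambda>x. f x + x) permutes UNIV" by (rule bij_imp_permutes[OF hb]) simp
  qed
  have "cycle_type f UNIV l = cycle_type g (V p k) l" for l
  proof (rule cycle_type_conj[OF cmV_perm[OF g] finite_V \<phi>])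
    fix x assume "x \<in> V p k"
    then show "f (\<phi> x) = \<phi> (g x)" unfolding f_def using \<psi>\<phi> by simp
  qed
  then show ?thesis using cm by blast
qed



section \<open>Elements of p-subgroups\<close>

lemma orbit_card_dvd:
  assumes perm: "permutation f" and fx: "(f ^^ n) x = x" and n: "0 < n"
  shows "card (orbit f x) dvd n"
proof -
  have self: "x \<in> orbit f x" using permutation_self_in_orbit[OF perm] .
  define d where "d = funpow_dist1 f x x"
  have "orbit f x = (\<lambda>n. (f ^^ n) x) ` {0..<d}" using orbit_conv_funpow_dist1[OF self] d_def by simp
  moreover have "inj_on (\<lambda>n. (f ^^ n) x) {0..<d}" using inj_on_funpow_dist1[OF self] d_def by simp
  ultimately have cd: "card (orbit f x) = d" by (simp add: card_image)
  have fd: "(f ^^ d) x = x" unfolding d_def by (rule funpow_dist1_prop[OF self])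
  have fqd: "(f ^^ (d * q)) x = x" for q
  proof (induction q)
    case 0 then show ?case by simp
  next
    case (Suc q)
    have "(f ^^ (d * Suc q)) x = (f ^^ d) ((f ^^ (d * q)) x)" by (simp add: funpow_add)
    then show ?case using Suc.IH fd by simp
  qed
  have "(f ^^ n) x = (f ^^ (n mod d)) ((f ^^ (d * (n div d))) x)"
    by (metis funpow_add comp_apply mod_mult_div_eq)
  then have fm: "(f ^^ (n mod d)) x = x" using fqd fx by simp
  have "n mod d = 0"
  proof (rule ccontr)
    assume "n mod d \<noteq> 0"
    then have "funpow_dist1 f x x \<le> n mod d"
      using funpow_dist1_le_self[where f=f and m="n mod d" and x=x and y=x] fm self by simp
    then have "d \<le> n mod d" by (simp add: d_def)
    moreover have "n mod d < d" unfolding d_def by simp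
    ultimately show False by simp
  qed
  then show ?thesis using cd by (simp add: dvd_eq_mod_eq_0)
qed

lemma sylow_elem_pow:
  assumes "sylow_subgroup (sym_group n) p S" "s \<in> S"
  shows "s ^^ card S = id"
proof -
  have sg: "subgroup S (sym_group n)" using assms(1) unfolding sylow_subgroup_def by blast
  let ?H = "(sym_group n)\<lparr>carrier := S\<rparr>"
  have grp: "group ?H" by (rule subgroup.subgroup_is_group[OF sg sym_group_is_group])
  have pw: "x [^]\<^bsub>?H\<^esub> (m::nat) = x ^^ m" for x m
  proof (induction m)
    case 0 then show ?case by (simp add: sym_group_def)
  next
    case (Suc m)
    then show ?case by (simp add: sym_group_def fun_eq_iff funpow_swap1)
  qed
  have "s [^]\<^bsub>?H\<^esub> order ?H = \<one>\<^bsub>?H\<^esub>"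
    by (rule group.pow_order_eq_1[OF grp]) (simp add: assms(2))
  then show ?thesis unfolding pw order_def by (simp add: sym_group_def)
qed

theorem corollary1p4:
  fixes p k :: nat and S :: "(nat \<Rightarrow> nat) set" and s :: "nat \<Rightarrow> nat"
  assumes "prime p" and "k \<ge> 1" and "odd (p ^ k)"
    and "card (UNIV :: 'a set) = p ^ k"
    and "sylow_subgroup (sym_group (p ^ k)) p S"
    and "s \<in> S"
  shows "\<exists>f :: 'a::{field,finite} \<Rightarrow> 'a. complete_mapping f \<and>
           cycle_type f UNIV = cycle_type s {1..p ^ k}"
proof -
  let ?q = "p ^ k"
  have p1: "1 < p" using assms(1) prime_gt_1_nat by blast
  have podd: "odd p" using assms(2,3) by simp
  have sg: "subgroup S (sym_group ?q)" using assms(5) unfolding sylow_subgroup_def by blast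
  have "s \<in> carrier (sym_group ?q)" using subgroup.subset[OF sg] assms(6) by blast
  then have sp: "s permutes {1..?q}" by (simp add: sym_group_carrier)
  have perm: "permutation s" unfolding permutation_permutes using sp by blast
  obtain e where se: "s ^^ (p ^ e) = id"
    using sylow_elem_pow[OF assms(5,6)] assms(5) unfolding sylow_subgroup_def by metis
  define Orbs where "Orbs = orbit s ` {1..?q}"
  define M where "M = image_mset card (mset_set Orbs)"
  have finO: "finite Orbs" unfolding Orbs_def by simp
  have Mp: "\<forall>x\<in>#M. \<exists>j. x = p ^ j"
  proof
    fix x assume "x \<in># M"
    then obtain y where y: "y \<in> {1..?q}" "x = card (orbit s y)" using finO unfolding M_def Orbs_def by auto
    have "(s ^^ (p ^ e)) y = y" using se by simp
    then have "x dvd p ^ e" using orbit_card_dvd[OF perm] y(2) p1 by simp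
    then show "\<exists>j. x = p ^ j" using divides_primepow_nat[OF assms(1)] by blast
  qed
  have self: "x \<in> orbit s x" for x using permutation_self_in_orbit[OF perm] .
  have Msum: "sum_mset M = p ^ k"
  proof -
    have "sum_mset M = sum card Orbs" unfolding M_def by (simp add: sum_unfold_sum_mset)
    also have "\<dots> = card (\<Union>Orbs)"
    proof (rule card_Union_disjoint[symmetric])
      show "disjoint Orbs"
      proof (rule pairwiseI)
        fix A B assume A: "A \<in> Orbs" and B: "B \<in> Orbs" and AB: "A \<noteq> B"
        show "disjnt A B"
        proof (rule ccontr)
          assume "\<not> disjnt A B"
          then obtain z where z: "z \<in> A" "z \<in> B" unfolding disjnt_def by blast
          obtain a b where ab: "A = orbit s a" "B = orbit s b" using A B unfolding Orbs_def by blast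
          have "orbit s z = A" using perm_orbit_eq[OF perm, of z a] z(1) ab(1) by simp
          moreover have "orbit s z = B" using perm_orbit_eq[OF perm, of z b] z(2) ab(2) by simp
          ultimately show False using AB by simp
        qed
      qed
      show "\<And>A. A \<in> Orbs \<Longrightarrow> finite A"
        unfolding Orbs_def using permutes_orbit_subset[OF sp] finite_subset by blast
    qed
    also have "\<Union>Orbs = {1..?q}"
      unfolding Orbs_def using permutes_orbit_subset[OF sp] self by blast
    finally show ?thesis by simp
  qed
  have Mcount: "count M l = cycle_type s {1..?q} l" for l
  proof -
    have "count M l = sum (count (mset_set Orbs)) (card -` {l} \<inter> set_mset (mset_set Orbs))"
      unfolding M_def by (rule count_image_mset)
    also have "set_mset (mset_set Orbs) = Orbs" using finO by simp
    also have "sum (count (mset_set Orbs)) (card -` {l} \<inter> Orbs) = sum (\<lambda>_. 1) (card -` {l} \<inter> Orbs)"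
      by (rule sum.cong) (use finO in auto)
    also have "\<dots> = card (card -` {l} \<inter> Orbs)" by simp
    also have "card -` {l} \<inter> Orbs = {orbit s x |x. x \<in> {1..?q} \<and> card (orbit s x) = l}"
      unfolding Orbs_def by blast
    finally show ?thesis unfolding cycle_type_def .
  qed
  obtain g where g: "cmV p k g" and gct: "\<And>l. cycle_type g (V p k) l = count M l"
    using main_model[OF assms(1) podd Mp Msum] by blast
  have fin: "finite (UNIV :: 'a set)" by simp
  have c0: "CHAR('a) > 0" by (rule finite_imp_CHAR_pos[OF fin])
  have cp: "prime CHAR('a)" by (rule prime_CHAR_semidom[OF c0])
  have "CHAR('a) dvd p ^ k" using CHAR_dvd_CARD[where 'a='a] assms(4) by simp
  then have "CHAR('a) dvd p" using prime_dvd_power_nat_iff[OF cp] assms(2) by simp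
  then have ch: "CHAR('a) = p" using primes_dvd_imp_eq[OF cp assms(1)] by blast
  obtain \<phi> :: "nat list \<Rightarrow> 'a" where inj: "inj_on \<phi> (V p k)"
    and add: "\<forall>x\<in>V p k. \<forall>y\<in>V p k. \<phi> (addp p x y) = \<phi> x + \<phi> y"
    using basis_exists[OF assms(1) ch assms(4) le_refl] by blast
  have "\<phi> ` V p k = UNIV"
    by (rule card_subset_eq[OF fin]) (simp_all add: card_image[OF inj] card_V assms(4))
  then have bij: "bij_betw \<phi> (V p k) UNIV" using inj by (simp add: bij_betw_def)
  obtain f :: "'a \<Rightarrow> 'a" where f: "complete_mapping f" "\<And>l. cycle_type f UNIV l = cycle_type g (V p k) l"
    using transport[OF _ g bij] add p1 by fastforce
  have "cycle_type f UNIV = cycle_type s {1..?q}"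
  proof
    fix l show "cycle_type f UNIV l = cycle_type s {1..?q} l" using f(2) gct Mcount by simp
  qed
  then show ?thesis using f(1) by blast
qed


end
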